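(* For all closed terms $P,Q\in\mathcal S_A$: $\mathrm{EqFSCL}\vdash P=Q$ if and only if $\mathbb M_{se}\models P=Q$, i.e. if and only if $se(P)=se(Q)$.
   Context: Let $A$ be a nonempty set of atoms. The signature $\Sigma_{SCL}(A)$ consists of the constants $\mathsf T,\mathsf F$, each atom $a\in A$ as a constant, unary negation $\neg$, and binary connectives $x\land^\circ y$ (left-sequential conjunction) and $x\lor^\circ y$ (left-sequential disjunction). $\mathcal S_A$ is the set of closed terms over $\Sigma_{SCL}(A)$. EqFSCL is the following set of equations in variables $x,y,z$: (F1) $\mathsf F=\neg\mathsf T$; (F2) $x\lor^\circ y=\neg(\neg x\land^\circ\neg y)$; (F3) $\neg\neg x=x$; (F4) $\mathsf T\land^\circ x=x$; (F5) $x\lor^\circ\mathsf F=x$; (F6) $\mathsf F\land^\circ x=\mathsf F$; (F7) $(x\land^\circ y)\land^\circ z=x\land^\circ(y\land^\circ z)$; (F8) $\neg x\land^\circ\mathsf F=x\land^\circ\mathsf F$; (F9) $(x\land^\circ\mathsf F)\lor^\circ y=(x\lor^\circ\mathsf T)\land^\circ y$; (F10) $(x\land^\circ y)\lor^\circ(z\land^\circ\mathsf F)=(x\lor^\circ(z\land^\circ\mathsf F))\land^\circ(y\lor^\circ(z\land^\circ\mathsf F))$. $E\vdash s=t$ means derivability in equational logic from $E$. Evaluation trees $\mathcal T_A$: $\mathsf T,\mathsf F\in\mathcal T_A$ and $(X\unlhd a\unrhd Y)\in\mathcal T_A$ for $X,Y\in\mathcal T_A$, $a\in A$ (root $a$,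 left branch $X$, right branch $Y$). Leaf replacement: $\mathsf T[\mathsf T\mapsto Y,\mathsf F\mapsto Z]=Y$, $\mathsf F[\mathsf T\mapsto Y,\mathsf F\mapsto Z]=Z$, $(X_1\unlhd a\unrhd X_2)[\mathsf T\mapsto Y,\mathsf F\mapsto Z]=X_1[\ldots]\unlhd a\unrhd X_2[\ldots]$; omitted replacements are identities. $se:\mathcal S_A\to\mathcal T_A$: $se(\mathsf T)=\mathsf T$, $se(\mathsf F)=\mathsf F$, $se(a)=\mathsf T\unlhd a\unrhd\mathsf F$, $se(\neg P)=se(P)[\mathsf T\mapsto\mathsf F,\mathsf F\mapsto\mathsf T]$, $se(P\land^\circ Q)=se(P)[\mathsf T\mapsto se(Q)]$, $se(P\lor^\circ Q)=se(P)[\mathsf F\mapsto se(Q)]$. $\mathbb M_{se}$ is the $\Sigma_{SCL}(A)$-algebra with domain $\{se(P)\mid P\in\mathcal S_A\}$ interpreting $\mathsf T,\mathsf F,a$ as $\mathsf T,\mathsf F,\mathsf T\unlhd a\unrhd\mathsf F$ and $\neg X=X[\mathsf T\mapsto\mathsf F,\mathsf F\mapsto\mathsf T]$, $X\land^\circ Y=X[\mathsf T\mapsto Y]$, $X\lor^\circ Y=X[\mathsf F\mapsto Y]$; so the interpretation of a closed term $P$ is $se(P)$. *)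

theory Defs
  imports Main
begin

text \<open>Closed terms over Sigma_SCL(A); the atom set A is the (nonempty) type 'a.\<close>
datatype 'a sterm = ST | SF | SAtom 'a | SNeg "'a sterm"
  | SAnd "'a sterm" "'a sterm" | SOr "'a sterm" "'a sterm"

datatype ('a, 'v) tm = Var 'v | Tt | Ft | At 'a | Neg "('a, 'v) tm"
  | LAnd "('a, 'v) tm" "('a, 'v) tm" | LOr "('a, 'v) tm" "('a, 'v) tm"

fun subst :: "('v \<Rightarrow> ('a, 'w) tm) \<Rightarrow> ('a, 'v) tm \<Rightarrow> ('a, 'w) tm" where
  "subst s (Var v) = s v"
| "subst s Tt = Tt"
| "subst s Ft = Ft"
| "subst s (At a) = At a"
| "subst s (Neg x) = Neg (subst s x)"
| "subst s (LAnd x y) = LAnd (subst s x) (subst s y)"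
| "subst s (LOr x y) = LOr (subst s x) (subst s y)"

fun emb :: "'a sterm \<Rightarrow> ('a, 'v) tm" where
  "emb ST = Tt"
| "emb SF = Ft"
| "emb (SAtom a) = At a"
| "emb (SNeg x) = Neg (emb x)"
| "emb (SAnd x y) = LAnd (emb x) (emb y)"
| "emb (SOr x y) = LOr (emb x) (emb y)"

definition EqFSCL :: "(('a, nat) tm \<times> ('a, nat) tm) set" where
  "EqFSCL = (let x = Var 0; y = Var 1; z = Var 2 in
    { (Ft, Neg Tt)
    , (LOr x y, Neg (LAnd (Neg x) (Neg y)))
    , (Neg (Neg x), x)
    , (LAnd Tt x, x)
    , (LOr x Ft, x)
    , (LAnd Ft x, Ft)
    , (LAnd (LAnd x y) z, LAnd x (LAnd y z))
    , (LAnd (Neg x) Ft, LAnd x Ft)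
    , (LOr (LAnd x Ft) y, LAnd (LOr x Tt) y)
    , (LOr (LAnd x y) (LAnd z Ft), LAnd (LOr x (LAnd z Ft)) (LOr y (LAnd z Ft))) })"

inductive derivable :: "(('a, 'v) tm \<times> ('a, 'v) tm) set \<Rightarrow> ('a, 'v) tm \<Rightarrow> ('a, 'v) tm \<Rightarrow> bool"
  for E where
  ax: "(l, r) \<in> E \<Longrightarrow> derivable E (subst s l) (subst s r)"
| refl: "derivable E t t"
| sym: "derivable E t u \<Longrightarrow> derivable E u t"
| trans: "derivable E t u \<Longrightarrow> derivable E u w \<Longrightarrow> derivable E t w"
| cong_Neg: "derivable E t u \<Longrightarrow> derivable E (Neg t) (Neg u)"
| cong_And: "derivable E t1 u1 \<Longrightarrow> derivable E t2 u2 \<Longrightarrow> derivable E (LAnd t1 t2) (LAnd u1 u2)"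
| cong_Or: "derivable E t1 u1 \<Longrightarrow> derivable E t2 u2 \<Longrightarrow> derivable E (LOr t1 t2) (LOr u1 u2)"

text \<open>Evaluation trees: ENode X a Y is X \<unlhd> a \<unrhd> Y.\<close>
datatype 'a etree = ET | EF | ENode "'a etree" 'a "'a etree"

fun repl :: "'a etree \<Rightarrow> 'a etree \<Rightarrow> 'a etree \<Rightarrow> 'a etree" where
  "repl ET Y Z = Y"
| "repl EF Y Z = Z"
| "repl (ENode X1 a X2) Y Z = ENode (repl X1 Y Z) a (repl X2 Y Z)"

fun se :: "'a sterm \<Rightarrow> 'a etree" where
  "se ST = ET"
| "se SF = EF"
| "se (SAtom a) = ENode ET a EF"
| "se (SNeg P) = repl (se P) EF ET"
| "se (SAnd P Q) = repl (se P) (se Q) EF"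
| "se (SOr P Q) = repl (se P) ET (se Q)"

end

theory Submission
  imports Defs
begin


fun hasT :: "'a etree \<Rightarrow> bool" where
  "hasT ET = True" | "hasT EF = False" | "hasT (ENode L a R) = (hasT L \<or> hasT R)"
fun hasF :: "'a etree \<Rightarrow> bool" where
  "hasF ET = False" | "hasF EF = True" | "hasF (ENode L a R) = (hasF L \<or> hasF R)"

lemma repl_repl: "repl (repl X A B) C D = repl X (repl A C D) (repl B C D)"
  by (induction X) auto
lemma repl_id[simp]: "repl X ET EF = X"
  by (induction X) auto
lemma leaf: "hasT X \<or> hasF X"
  by (induction X) auto
lemma hasT_repl[simp]: "hasT (repl X Y Z) = ((hasT X \<and> hasT Y) \<or> (hasF X \<and> hasT Z))"
  by (induction X) auto
lemma hasF_repl[simp]: "hasF (repl X Y Z) = ((hasT X \<and> hasF Y) \<or> (hasF X \<and> hasF Z))"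
  by (induction X) auto
lemma noF: "\<not> hasF X \<Longrightarrow> repl X Y Z = repl X Y W"
  by (induction X) auto
lemma noT: "\<not> hasT X \<Longrightarrow> repl X Y Z = repl X W Z"
  by (induction X) auto
lemma noT_id: "\<not> hasT X \<Longrightarrow> repl X Y EF = X"
  using noT[of X Y EF ET] by simp
lemma noF_id: "\<not> hasF X \<Longrightarrow> repl X ET Z = X"
  using noF[of X ET Z EF] by simp

lemma size_le: "hasT V \<Longrightarrow> size B \<le> size (repl V B Z)"
  by (induction V) auto
lemma size_lt: "hasT (ENode L a R) \<Longrightarrow> size B < size (repl (ENode L a R) B Z)"
  using size_le[of L B Z] size_le[of R B Z] by auto
lemma size_leF: "hasF V \<Longrightarrow> size B \<le> size (repl V Y B)"
  by (induction V) auto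
lemma size_ltF: "hasF (ENode L a R) \<Longrightarrow> size B < size (repl (ENode L a R) Y B)"
  using size_leF[of L B Y] size_leF[of R B Y] by auto

lemma repl_ET: "repl V1 V2 EF = ET \<Longrightarrow> V1 = ET \<and> V2 = ET"
  by (cases V1) auto

lemma RC: "hasT B \<Longrightarrow> repl V B EF = repl V' B EF \<Longrightarrow> V = V'"
proof (induction V arbitrary: V')
  case ET
  show ?case
  proof (cases V')
    case (ENode L a R)
    show ?thesis
    proof (cases "hasT V'")
      case True
      have "size B < size (repl V' B EF)" using size_lt[of L a R B EF] True ENode by simp
      then show ?thesis using ET.prems by (metis less_irrefl repl.simps(1))
    next
      case False
      with ET noT_id[of V' B] show ?thesis by auto
    qed
  qed (use ET in auto)
next
  case EF
  then show ?case by (cases V') auto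
next
  case (ENode L a R)
  show ?case
  proof (cases V')
    case ET
    show ?thesis
    proof (cases "hasT (ENode L a R)")
      case True
      have "size B < size (repl (ENode L a R) B EF)" using size_lt[of L a R B EF] True by simp
      then show ?thesis using ENode.prems ET by (metis less_irrefl repl.simps(1))
    next
      case False
      with ENode.prems ET noT_id[of "ENode L a R" B] show ?thesis by auto
    qed
  next
    case EF then show ?thesis using ENode.prems by auto
  next
    case (ENode L' a' R') then show ?thesis using ENode.IH ENode.prems by auto
  qed
qed

lemma RCF: "hasF B \<Longrightarrow> repl V ET B = repl V' ET B \<Longrightarrow> V = V'"
proof (induction V arbitrary: V')
  case EF
  show ?case
  proof (cases V')
    case (ENode L a R)
    show ?thesis
    proof (cases "hasF V'")
      case True
      have "size B < size (repl V' ET B)" using size_ltF[of L a R B ET] True ENode by simp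
      then show ?thesis using EF.prems by (metis less_irrefl repl.simps(2))
    next
      case False
      with EF noF_id[of V' B] show ?thesis by auto
    qed
  qed (use EF in auto)
next
  case ET
  then show ?case by (cases V') auto
next
  case (ENode L a R)
  show ?case
  proof (cases V')
    case EF
    show ?thesis
    proof (cases "hasF (ENode L a R)")
      case True
      have "size B < size (repl (ENode L a R) ET B)" using size_ltF[of L a R B ET] True by simp
      then show ?thesis using ENode.prems EF by (metis less_irrefl repl.simps(2))
    next
      case False
      with ENode.prems EF noF_id[of "ENode L a R" B] show ?thesis by auto
    qed
  next
    case ET then show ?thesis using ENode.prems by auto
  next
    case (ENode L' a' R') then show ?thesis using ENode.IH ENode.prems by auto
  qed
qed

lemma Levi:
  "repl A B EF = repl A' B' EF \<Longrightarrow> hasT B \<Longrightarrow> hasT B' \<Longrightarrow>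
   (A = A' \<and> \<not> hasT A) \<or> (\<exists>V. B = repl V B' EF \<and> A' = repl A V EF)
   \<or> (\<exists>V. B' = repl V B EF \<and> A = repl A' V EF)"
proof (induction A arbitrary: A')
  case ET
  then show ?case by auto
next
  case EF
  then show ?case by (cases A') auto
next
  case (ENode A1 a A2)
  show ?case
  proof (cases A')
    case ET
    then show ?thesis using ENode.prems by auto
  next
    case EF
    then show ?thesis using ENode.prems by auto
  next
    case (ENode A1' a' A2')
    note N = this
    have e1: "repl A1 B EF = repl A1' B' EF" and e2: "repl A2 B EF = repl A2' B' EF" and aa: "a = a'"
      using ENode.prems N by auto
    note I1 = ENode.IH(1)[OF e1 ENode.prems(2,3)]
    note I2 = ENode.IH(2)[OF e2 ENode.prems(2,3)]
    have cross: "B = B'" if "B = repl V1 B' EF" "B' = repl V2 B EF" for V1 V2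
    proof -
      have "repl ET B EF = repl (repl V1 V2 EF) B EF" using that by (simp add: repl_repl)
      then have "ET = repl V1 V2 EF" using RC ENode.prems(2) by blast
      then have "V1 = ET" using repl_ET by metis
      with that(1) show ?thesis by simp
    qed
    from I1 show ?thesis
    proof (elim disjE exE conjE)
      assume a1: "A1 = A1'" "\<not> hasT A1"
      from I2 show ?thesis
      proof (elim disjE exE conjE)
        assume "A2 = A2'" "\<not> hasT A2" then show ?thesis using a1 N aa by auto
      next
        fix V assume "B = repl V B' EF" "A2' = repl A2 V EF"
        then show ?thesis using a1 N aa noT_id[of A1 V] by auto
      next
        fix V assume "B' = repl V B EF" "A2 = repl A2' V EF"
        then show ?thesis using a1 N aa noT_id[of A1 V] by auto
      qed
    next
      fix V1 assume b1: "B = repl V1 B' EF" "A1' = repl A1 V1 EF"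
      from I2 show ?thesis
      proof (elim disjE exE conjE)
        assume "A2 = A2'" "\<not> hasT A2" then show ?thesis using b1 N aa noT_id[of A2 V1] by auto
      next
        fix V assume "B = repl V B' EF" "A2' = repl A2 V EF"
        moreover have "V = V1" using RC ENode.prems(3) b1 calculation by metis
        ultimately show ?thesis using b1 N aa by auto
      next
        fix V assume c: "B' = repl V B EF" "A2 = repl A2' V EF"
        have BB: "B = B'" using cross b1 c by blast
        have "repl V1 B' EF = repl ET B' EF" using b1(1) BB by simp
        then have v1: "V1 = ET" using RC[OF ENode.prems(3)] by blast
        have "repl V B EF = repl ET B EF" using c(1) BB by simp
        then have v: "V = ET" using RC[OF ENode.prems(2)] by blast
        have "A1' = A1" "A2 = A2'" using b1(2) c(2) v1 v by simp_all
        then have "B = repl ET B' EF \<and> A' = repl (ENode A1 a A2) ET EF" using N aa BB by simp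
        then show ?thesis by blast
      qed
    next
      fix V1 assume b1: "B' = repl V1 B EF" "A1 = repl A1' V1 EF"
      from I2 show ?thesis
      proof (elim disjE exE conjE)
        assume "A2 = A2'" "\<not> hasT A2" then show ?thesis using b1 N aa noT_id[of A2 V1] by auto
      next
        fix V assume c: "B = repl V B' EF" "A2' = repl A2 V EF"
        have BB: "B = B'" using cross c b1 by blast
        have "repl V1 B EF = repl ET B EF" using b1(1) BB by simp
        then have v1: "V1 = ET" using RC[OF ENode.prems(2)] by blast
        have "repl V B' EF = repl ET B' EF" using c(1) BB by simp
        then have v: "V = ET" using RC[OF ENode.prems(3)] by blast
        have "A1 = A1'" "A2' = A2" using b1(2) c(2) v1 v by simp_all
        then have "B' = repl ET B EF \<and> ENode A1 a A2 = repl A' ET EF" using N aa BB by simp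
        then show ?thesis by blast
      next
        fix V assume "B' = repl V B EF" "A2 = repl A2' V EF"
        moreover have "V = V1" using RC ENode.prems(2) b1 calculation by metis
        ultimately show ?thesis using b1 N aa by auto
      qed
    qed
  qed
qed

lemma SZ: "hasT G \<Longrightarrow> hasF W \<Longrightarrow> repl G ET E = repl A W EF \<Longrightarrow> size E < size W"
proof (induction G arbitrary: A)
  case ET
  then show ?case by (cases A) auto
next
  case EF
  then show ?case by simp
next
  case (ENode G1 a G2)
  show ?case
  proof (cases A)
    case ET
    then have "W = repl (ENode G1 a G2) ET E" using ENode.prems by simp
    moreover have "hasF (ENode G1 a G2)" using calculation ENode.prems(2) by auto
    ultimately show ?thesis using size_ltF[of G1 a G2 E ET] by simp
  next
    case EF then show ?thesis using ENode.prems by simp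
  next
    case (ENode A1 a' A2)
    then show ?thesis using ENode.IH ENode.prems by auto
  qed
qed

lemma MixL: "size E < size W \<Longrightarrow> hasT E \<Longrightarrow> hasF E \<Longrightarrow> repl G ET E = repl A W EF \<Longrightarrow>
   \<not> hasF A \<and> (\<exists>V. G = repl A V EF \<and> W = repl V ET E)"
proof (induction A arbitrary: G)
  case ET
  then show ?case by auto
next
  case EF
  then show ?case by (cases G) auto
next
  case (ENode A1 a A2)
  show ?case
  proof (cases G)
    case ET then show ?thesis using ENode.prems by simp
  next
    case EF
    then have E: "E = repl (ENode A1 a A2) W EF" using ENode.prems by simp
    show ?thesis
    proof (cases "hasT (ENode A1 a A2)")
      case True
      then show ?thesis using size_le[OF True, of W EF] E ENode.prems(1) by simp
    next
      case False
      then show ?thesis using E ENode.prems(2) by simp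
    qed
  next
    case (ENode G1 a' G2)
    have e1: "repl G1 ET E = repl A1 W EF" and e2: "repl G2 ET E = repl A2 W EF" and "a' = a"
      using ENode ENode.prems by auto
    obtain V1 V2 where "\<not> hasF A1" "G1 = repl A1 V1 EF" "W = repl V1 ET E"
        "\<not> hasF A2" "G2 = repl A2 V2 EF" "W = repl V2 ET E"
      using ENode.IH(1)[OF ENode.prems(1-3) e1] ENode.IH(2)[OF ENode.prems(1-3) e2] by blast
    moreover have "V1 = V2" using RCF ENode.prems(3) calculation by metis
    ultimately show ?thesis using ENode \<open>a' = a\<close> by auto
  qed
qed

definition primeT :: "'a etree \<Rightarrow> bool" where
  "primeT K \<longleftrightarrow> (\<forall>q K'. \<not> hasF q \<longrightarrow> K = repl q K' EF \<longrightarrow> q = ET)"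

lemma prime_EF: "primeT EF"
  unfolding primeT_def by (metis etree.distinct(3) etree.distinct(5) hasF.simps(2) repl.simps(3) etree.exhaust)

lemma PU: "\<not> hasF p \<Longrightarrow> \<not> hasF p' \<Longrightarrow> primeT K \<Longrightarrow> primeT K' \<Longrightarrow>
   repl p K EF = repl p' K' EF \<Longrightarrow> p = p' \<and> K = K'"
proof (induction p arbitrary: p')
  case ET
  then show ?case unfolding primeT_def by auto
next
  case EF then show ?case by simp
next
  case (ENode L a R)
  show ?case
  proof (cases p')
    case ET
    then show ?thesis using ENode.prems unfolding primeT_def
      by (metis etree.distinct(5) repl.simps(1))
  next
    case EF then show ?thesis using ENode.prems by simp
  next
    case (ENode L' a' R') then show ?thesis using ENode.IH ENode.prems by auto
  qed
qed



datatype 'a core = Lit bool 'a "'a etree" "'a etree" | Cj "'a core" "'a core" | Dj "'a core" "'a core"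

fun isCj :: "'a core \<Rightarrow> bool" where "isCj (Cj _ _) = True" | "isCj _ = False"
fun isDj :: "'a core \<Rightarrow> bool" where "isDj (Dj _ _) = True" | "isDj _ = False"

fun ct :: "'a core \<Rightarrow> 'a etree" where
  "ct (Lit s a pt pf) = (if s then ENode pt a (repl pf EF EF) else ENode (repl pf EF EF) a pt)"
| "ct (Cj c d) = repl (ct c) (ct d) EF"
| "ct (Dj c d) = repl (ct c) ET (ct d)"

fun wfc :: "'a core \<Rightarrow> bool" where
  "wfc (Lit s a pt pf) = (\<not> hasF pt \<and> \<not> hasF pf)"
| "wfc (Cj c d) = (\<not> isCj c \<and> wfc c \<and> wfc d)"
| "wfc (Dj c d) = (\<not> isDj c \<and> wfc c \<and> wfc d)"

fun dualc :: "'a core \<Rightarrow> 'a core" where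
  "dualc (Lit s a pt pf) = Lit (\<not> s) a pf pt"
| "dualc (Cj c d) = Dj (dualc c) (dualc d)"
| "dualc (Dj c d) = Cj (dualc c) (dualc d)"

definition neg :: "'a etree \<Rightarrow> 'a etree" where "neg X = repl X EF ET"

lemma neg_neg[simp]: "neg (neg X) = X"
  unfolding neg_def by (simp add: repl_repl)

lemma neg_T: "neg (repl G ET E) = repl (neg G) (neg E) EF"
  unfolding neg_def by (simp add: repl_repl)


lemma hasT_of_noF: "\<not> hasF X \<Longrightarrow> hasT X" using leaf by blast

lemma wfc_TF': "wfc c \<Longrightarrow> hasT (ct c) \<and> hasF (ct c)"
proof (induction c)
  case (Lit s a pt pf)
  then show ?case using hasT_of_noF[of pt] hasT_of_noF[of pf] by auto
qed auto

lemma ct_dual: "wfc c \<Longrightarrow> ct (dualc c) = neg (ct c)"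
proof (induction c)
  case (Lit s a pt pf)
  then show ?case unfolding neg_def
    by (auto simp: repl_repl noF[of pt EF ET EF] noF[of pf ET ET EF] noF_id)
next
  case (Cj c d) then show ?case unfolding neg_def by (simp add: repl_repl)
next
  case (Dj c d) then show ?case unfolding neg_def by (simp add: repl_repl)
qed

lemma wfc_dual: "wfc c \<Longrightarrow> wfc (dualc c)"
  by (induction c) (auto elim: isCj.elims isDj.elims)

lemma isCj_dual: "isCj (dualc c) = isDj c" by (cases c) auto
lemma isDj_dual: "isDj (dualc c) = isCj c" by (cases c) auto

lemma PR: "wfc c \<Longrightarrow> primeT (ct c)"
proof (induction c)
  case (Lit s a pt pf)
  show ?case unfolding primeT_def
  proof (intro allI impI)
    fix q K assume q: "\<not> hasF q" and e: "ct (Lit s a pt pf) = repl q K EF"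
    show "q = ET"
    proof (cases q)
      case (ENode q1 b q2)
      have h: "hasT q1" "hasT q2" using q ENode hasT_of_noF by auto
      show ?thesis
      proof (cases s)
        case True
        then have "pt = repl q1 K EF" "repl pf EF EF = repl q2 K EF" using e ENode by auto
        then have "\<not> hasF (repl q1 K EF)" "hasT (repl pf EF EF) = hasT (repl q2 K EF)" using Lit.prems by (metis wfc.simps(1), simp)
        then show ?thesis using h leaf[of K] by simp
      next
        case False
        then have "pt = repl q2 K EF" "repl pf EF EF = repl q1 K EF" using e ENode by auto
        then have "\<not> hasF (repl q2 K EF)" "hasT (repl pf EF EF) = hasT (repl q1 K EF)" using Lit.prems by (metis wfc.simps(1), simp)
        then show ?thesis using h leaf[of K] by simp
      qed
    qed (use q in auto)
  qed
next
  case (Cj c d)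
  show ?case unfolding primeT_def
  proof (intro allI impI)
    fix q K assume q: "\<not> hasF q" and e: "ct (Cj c d) = repl q K EF"
    have tf: "hasT (ct c)" "hasF (ct c)" "hasT (ct d)" "hasF (ct d)" using wfc_TF' Cj.prems by auto
    have e': "repl (ct c) (ct d) EF = repl q K EF" using e by simp
    have hK: "hasT K" using arg_cong[OF e', of hasT] tf q by auto
    from Levi[OF e' tf(3) hK] show "q = ET"
    proof (elim disjE exE conjE)
      assume "ct c = q" "\<not> hasT (ct c)" then show ?thesis using tf by simp
    next
      fix V assume "q = repl (ct c) V EF" then show ?thesis using q tf by simp
    next
      fix V assume "ct c = repl q V EF"
      then show ?thesis using Cj q unfolding primeT_def by auto
    qed
  qed
next
  case (Dj c d)
  show ?case unfolding primeT_def
  proof (intro allI impI)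
    fix q K assume q: "\<not> hasF q" and e: "ct (Dj c d) = repl q K EF"
    have tf: "hasT (ct c)" "hasF (ct c)" "hasT (ct d)" "hasF (ct d)" using wfc_TF' Dj.prems by auto
    have e': "repl (ct c) ET (ct d) = repl q K EF" using e by simp
    have hK: "hasF K" using arg_cong[OF e', of hasF] tf q by auto
    have "size (ct d) < size K" using SZ[OF tf(1) hK e'] .
    from MixL[OF this tf(3,4) e'] obtain V where "ct c = repl q V EF" by blast
    then show "q = ET" using Dj q unfolding primeT_def by auto
  qed
qed

lemma NMF: "wfc c \<Longrightarrow> \<not> isCj c \<Longrightarrow> ct c = repl A W EF \<Longrightarrow> hasF W \<Longrightarrow> A = ET"
proof (cases c)
  case (Lit s a pt pf)
  assume w: "wfc c" "ct c = repl A W EF" "hasF W"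
  show "A = ET"
  proof (cases A)
    case EF then show ?thesis using w Lit by (auto split: if_splits)
  next
    case (ENode A1 b A2)
    show ?thesis
    proof (cases s)
      case True
      then have "pt = repl A1 W EF" using w Lit ENode by auto
      then have "\<not> hasF (repl A1 W EF)" using w Lit by simp
      then show ?thesis using w leaf[of A1] by simp
    next
      case False
      then have "pt = repl A2 W EF" using w Lit ENode by auto
      then have "\<not> hasF (repl A2 W EF)" using w Lit by simp
      then show ?thesis using w leaf[of A2] by simp
    qed
  qed simp
next
  case (Cj c1 d1)
  assume "\<not> isCj c" then show ?thesis using Cj by simp
next
  case (Dj c2 e)
  assume w: "wfc c" "ct c = repl A W EF" "hasF W"
  have tf: "hasT (ct c2)" "hasF (ct c2)" "hasT (ct e)" "hasF (ct e)" using wfc_TF' w Dj by auto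
  have e': "repl (ct c2) ET (ct e) = repl A W EF" using w Dj by simp
  have "size (ct e) < size W" using SZ[OF tf(1) w(3) e'] .
  from MixL[OF this tf(3,4) e'] obtain V where "\<not> hasF A" "ct c2 = repl A V EF" by blast
  then show "A = ET" using PR[of c2] w Dj unfolding primeT_def by auto
qed

lemma CJS:
  assumes w: "wfc c1" "wfc c1'" "wfc d" "wfc d'" "\<not> isCj c1" "\<not> isCj c1'"
    and e: "repl (ct c1) (ct d) EF = repl (ct c1') (ct d') EF"
  shows "ct c1 = ct c1' \<and> ct d = ct d'"
proof -
  have tf: "hasT (ct c1)" "hasF (ct c1)" "hasT (ct d)" "hasF (ct d)"
    "hasT (ct c1')" "hasF (ct c1')" "hasT (ct d')" "hasF (ct d')" using wfc_TF' w by auto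
  from Levi[OF e tf(3) tf(7)] show ?thesis
  proof (elim disjE exE conjE)
    assume "ct c1 = ct c1'" "\<not> hasT (ct c1)" then show ?thesis using tf by simp
  next
    fix V assume a: "ct d = repl V (ct d') EF" "ct c1' = repl (ct c1) V EF"
    show ?thesis
    proof (cases "hasF V")
      case True
      then have "ct c1 = ET" using NMF[OF w(2) w(6) a(2)] by simp
      then show ?thesis using tf by simp
    next
      case False
      then have "V = ET" using PR[OF w(3)] a(1) unfolding primeT_def by blast
      then show ?thesis using a by simp
    qed
  next
    fix V assume a: "ct d' = repl V (ct d) EF" "ct c1 = repl (ct c1') V EF"
    show ?thesis
    proof (cases "hasF V")
      case True
      then have "ct c1' = ET" using NMF[OF w(1) w(5) a(2)] by simp
      then show ?thesis using tf by simp
    next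
      case False
      then have "V = ET" using PR[OF w(4)] a(1) unfolding primeT_def by blast
      then show ?thesis using a by simp
    qed
  qed
qed

lemma ct_dual_T: "wfc c \<Longrightarrow> wfc e \<Longrightarrow> neg (repl (ct c) ET (ct e)) = repl (ct (dualc c)) (ct (dualc e)) EF"
  by (simp add: neg_T ct_dual)

lemma neg_inj: "neg X = neg Y \<Longrightarrow> X = Y" by (metis neg_neg)

lemma lit_vs_Dj:
  assumes w: "wfc (Lit s a pt pf)" "wfc c2" "wfc e"
    and eq: "ct (Lit s a pt pf) = repl (ct c2) ET (ct e)"
  shows False
proof -
  have "ct (dualc (Lit s a pt pf)) = repl (ct (dualc c2)) (ct (dualc e)) EF"
    using arg_cong[OF eq, of neg] ct_dual[OF w(1)] ct_dual_T[OF w(2,3)] by simp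
  moreover have "hasF (ct (dualc e))" "hasF (ct (dualc c2))" using wfc_TF' wfc_dual w by blast+
  moreover have "wfc (dualc (Lit s a pt pf))" using w(1) by simp
  ultimately have "ct (dualc c2) = ET" using NMF[of "dualc (Lit s a pt pf)"] by simp
  then show False using \<open>hasF (ct (dualc c2))\<close> by simp
qed

lemma CI: "wfc c \<Longrightarrow> wfc c' \<Longrightarrow> ct c = ct c' \<Longrightarrow> c = c'"
proof (induction c arbitrary: c')
  case (Lit s a pt pf)
  show ?case
  proof (cases c')
    case (Lit s' a' pt' pf')
    have inj: "repl x EF EF = repl y EF EF \<Longrightarrow> \<not> hasF x \<Longrightarrow> \<not> hasF y \<Longrightarrow> x = y" for x y :: "'a etree"
      using PU[of x y EF EF] prime_EF by blast
    have nn: "\<not> (repl x EF EF = y)" if "\<not> hasF y" for x y :: "'a etree"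
      using that leaf[of y] by auto
    have w: "\<not> hasF pt" "\<not> hasF pf" "\<not> hasF pt'" "\<not> hasF pf'" using Lit.prems Lit by auto
    have e: "ct (Lit s a pt pf) = ct (Lit s' a' pt' pf')" using Lit.prems Lit by simp
    show ?thesis
    proof (cases s; cases s')
      assume "s" "s'"
      then have "pt = pt'" "a = a'" "repl pf EF EF = repl pf' EF EF" using e by auto
      then show ?thesis using inj w Lit \<open>s\<close> \<open>s'\<close> by simp
    next
      assume "\<not> s" "\<not> s'"
      then have "pt = pt'" "a = a'" "repl pf EF EF = repl pf' EF EF" using e by auto
      then show ?thesis using inj w Lit \<open>\<not> s\<close> \<open>\<not> s'\<close> by simp
    next
      assume "s" "\<not> s'"
      then have "repl pf' EF EF = pt" using e by auto
      then show ?thesis using nn w by blast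
    next
      assume "\<not> s" "s'"
      then have "repl pf EF EF = pt'" using e by auto
      then show ?thesis using nn w by blast
    qed
  next
    case (Cj c1 d1)
    have "ct c1 = ET" using NMF[OF Lit.prems(1), of "ct c1" "ct d1"] Lit.prems Cj wfc_TF'[of d1] by simp
    then show ?thesis using Lit.prems Cj wfc_TF'[of c1] by simp
  next
    case (Dj c2 e)
    then show ?thesis using lit_vs_Dj[OF Lit.prems(1), of c2 e] Lit.prems by simp
  qed
next
  case (Cj c1 d)
  show ?case
  proof (cases c')
    case (Lit s a pt pf)
    have "ct c1 = ET" using NMF[of c' "ct c1" "ct d"] Cj.prems Lit wfc_TF'[of d] by simp
    then show ?thesis using Cj.prems wfc_TF'[of c1] by simp
  next
    case (Cj c1' d')
    then have "ct c1 = ct c1' \<and> ct d = ct d'" using CJS[of c1 c1' d d'] Cj.prems by simp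
    then show ?thesis using Cj.IH Cj.prems \<open>c' = Cj c1' d'\<close> by simp
  next
    case (Dj c2 e)
    have "ct c1 = ET" using NMF[of c' "ct c1" "ct d"] Cj.prems Dj wfc_TF'[of d] by simp
    then show ?thesis using Cj.prems wfc_TF'[of c1] by simp
  qed
next
  case (Dj c2 e)
  show ?case
  proof (cases c')
    case (Lit s a pt pf)
    then show ?thesis using lit_vs_Dj[of s a pt pf c2 e] Dj.prems by simp
  next
    case (Cj c1 d)
    have "ct c1 = ET" using NMF[of "Dj c2 e" "ct c1" "ct d"] Dj.prems Cj wfc_TF'[of d] by simp
    then show ?thesis using Dj.prems Cj wfc_TF'[of c1] by simp
  next
    case (Dj c2' e')
    have "repl (ct (dualc c2)) (ct (dualc e)) EF = repl (ct (dualc c2')) (ct (dualc e')) EF"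
      using arg_cong[OF Dj.prems(3), of neg] ct_dual_T[of c2 e] ct_dual_T[of c2' e'] Dj.prems Dj by simp
    then have "ct (dualc c2) = ct (dualc c2') \<and> ct (dualc e) = ct (dualc e')"
      using CJS[of "dualc c2" "dualc c2'" "dualc e" "dualc e'"] Dj.prems Dj wfc_dual isCj_dual by auto
    then have "ct c2 = ct c2'" "ct e = ct e'" using ct_dual Dj.prems Dj neg_inj by (metis wfc.simps(3))+
    then show ?thesis using Dj.IH Dj.prems Dj by simp
  qed
qed



abbreviation deq :: "('a, nat) tm \<Rightarrow> ('a, nat) tm \<Rightarrow> bool" (infix "\<simeq>" 50) where
  "x \<simeq> y \<equiv> derivable EqFSCL x y"

definition sb :: "('a, nat) tm \<Rightarrow> ('a, nat) tm \<Rightarrow> ('a, nat) tm \<Rightarrow> nat \<Rightarrow> ('a, nat) tm" where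
  "sb x y z = (\<lambda>n. if n = 0 then x else if n = 1 then y else z)"

lemma axi: "(l, r) \<in> EqFSCL \<Longrightarrow> subst s l = a \<Longrightarrow> subst s r = b \<Longrightarrow> a \<simeq> b"
  using derivable.ax by metis

lemmas dtrans[trans] = derivable.trans
lemmas dsym = derivable.sym
lemmas drefl = derivable.refl

lemma F1: "Ft \<simeq> Neg Tt" by (rule axi[of "Ft" "Neg Tt" "sb x y z"]) (simp_all add: EqFSCL_def sb_def Let_def)
lemma F2: "LOr x y \<simeq> Neg (LAnd (Neg x) (Neg y))" by (rule axi[of "LOr (Var 0) (Var 1)" "Neg (LAnd (Neg (Var 0)) (Neg (Var 1)))" "sb x y z"]) (simp_all add: EqFSCL_def sb_def Let_def)
lemma F3: "Neg (Neg x) \<simeq> x" by (rule axi[of "Neg (Neg (Var 0))" "Var 0" "sb x y z"]) (simp_all add: EqFSCL_def sb_def Let_def)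
lemma F4: "LAnd Tt x \<simeq> x" by (rule axi[of "LAnd Tt (Var 0)" "Var 0" "sb x y z"]) (simp_all add: EqFSCL_def sb_def Let_def)
lemma F5: "LOr x Ft \<simeq> x" by (rule axi[of "LOr (Var 0) Ft" "Var 0" "sb x y z"]) (simp_all add: EqFSCL_def sb_def Let_def)
lemma F6: "LAnd Ft x \<simeq> Ft" by (rule axi[of "LAnd Ft (Var 0)" "Ft" "sb x y z"]) (simp_all add: EqFSCL_def sb_def Let_def)
lemma F7: "LAnd (LAnd x y) z \<simeq> LAnd x (LAnd y z)" by (rule axi[of "LAnd (LAnd (Var 0) (Var 1)) (Var 2)" "LAnd (Var 0) (LAnd (Var 1) (Var 2))" "sb x y z"]) (simp_all add: EqFSCL_def sb_def Let_def)
lemma F8: "LAnd (Neg x) Ft \<simeq> LAnd x Ft" by (rule axi[of "LAnd (Neg (Var 0)) Ft" "LAnd (Var 0) Ft" "sb x y z"]) (simp_all add: EqFSCL_def sb_def Let_def)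
lemma F9: "LOr (LAnd x Ft) y \<simeq> LAnd (LOr x Tt) y" by (rule axi[of "LOr (LAnd (Var 0) Ft) (Var 1)" "LAnd (LOr (Var 0) Tt) (Var 1)" "sb x y z"]) (simp_all add: EqFSCL_def sb_def Let_def)
lemma F10: "LOr (LAnd x y) (LAnd z Ft) \<simeq> LAnd (LOr x (LAnd z Ft)) (LOr y (LAnd z Ft))"
  by (rule axi[of "LOr (LAnd (Var 0) (Var 1)) (LAnd (Var 2) Ft)" "LAnd (LOr (Var 0) (LAnd (Var 2) Ft)) (LOr (Var 1) (LAnd (Var 2) Ft))" "sb x y z"]) (simp_all add: EqFSCL_def sb_def Let_def)

lemma cN: "a \<simeq> b \<Longrightarrow> Neg a \<simeq> Neg b" by (rule derivable.cong_Neg)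
lemma cA: "a \<simeq> b \<Longrightarrow> c \<simeq> d \<Longrightarrow> LAnd a c \<simeq> LAnd b d" by (rule derivable.cong_And)
lemma cO: "a \<simeq> b \<Longrightarrow> c \<simeq> d \<Longrightarrow> LOr a c \<simeq> LOr b d" by (rule derivable.cong_Or)
lemma cAL: "a \<simeq> b \<Longrightarrow> LAnd a c \<simeq> LAnd b c" by (rule cA, assumption, rule drefl)
lemma cAR: "a \<simeq> b \<Longrightarrow> LAnd c a \<simeq> LAnd c b" by (rule cA, rule drefl, assumption)
lemma cOL: "a \<simeq> b \<Longrightarrow> LOr a c \<simeq> LOr b c" by (rule cO, assumption, rule drefl)
lemma cOR: "a \<simeq> b \<Longrightarrow> LOr c a \<simeq> LOr c b" by (rule cO, rule drefl, assumption)

lemma negT: "Neg Tt \<simeq> Ft" by (rule dsym, rule F1)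
lemma negF: "Neg Ft \<simeq> Tt"
proof -
  have "Neg Ft \<simeq> Neg (Neg Tt)" by (rule cN, rule F1)
  also have "\<dots> \<simeq> Tt" by (rule F3)
  finally show ?thesis .
qed

lemma dm_and: "Neg (LAnd x y) \<simeq> LOr (Neg x) (Neg y)"
proof -
  have "LOr (Neg x) (Neg y) \<simeq> Neg (LAnd (Neg (Neg x)) (Neg (Neg y)))" by (rule F2)
  also have "\<dots> \<simeq> Neg (LAnd x y)" by (rule cN, rule cA; rule F3)
  finally show ?thesis by (rule dsym)
qed

lemma dm_or: "Neg (LOr x y) \<simeq> LAnd (Neg x) (Neg y)"
proof -
  have "Neg (LOr x y) \<simeq> Neg (Neg (LAnd (Neg x) (Neg y)))" by (rule cN, rule F2)
  also have "\<dots> \<simeq> LAnd (Neg x) (Neg y)" by (rule F3)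
  finally show ?thesis .
qed

lemma ncancel: "Neg a \<simeq> Neg b \<Longrightarrow> a \<simeq> b"
proof -
  assume h: "Neg a \<simeq> Neg b"
  have "a \<simeq> Neg (Neg a)" by (rule dsym, rule F3)
  also have "\<dots> \<simeq> Neg (Neg b)" by (rule cN, rule h)
  also have "\<dots> \<simeq> b" by (rule F3)
  finally show ?thesis .
qed

lemma ncancel2: "Neg a \<simeq> c \<Longrightarrow> Neg b \<simeq> c \<Longrightarrow> a \<simeq> b"
  by (rule ncancel, rule dtrans, assumption, rule dsym, assumption)

lemma andT: "LAnd x Tt \<simeq> x"
proof (rule ncancel)
  have "Neg (LAnd x Tt) \<simeq> LOr (Neg x) (Neg Tt)" by (rule dm_and)
  also have "\<dots> \<simeq> LOr (Neg x) Ft" by (rule cOR, rule negT)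
  also have "\<dots> \<simeq> Neg x" by (rule F5)
  finally show "Neg (LAnd x Tt) \<simeq> Neg x" .
qed

lemma orT_l: "LOr Tt x \<simeq> Tt"
proof -
  have "LOr Tt x \<simeq> Neg (LAnd (Neg Tt) (Neg x))" by (rule F2)
  also have "\<dots> \<simeq> Neg (LAnd Ft (Neg x))" by (rule cN, rule cAL, rule negT)
  also have "\<dots> \<simeq> Neg Ft" by (rule cN, rule F6)
  also have "\<dots> \<simeq> Tt" by (rule negF)
  finally show ?thesis .
qed

lemma orF_l: "LOr Ft x \<simeq> x"
proof -
  have "LOr Ft x \<simeq> Neg (LAnd (Neg Ft) (Neg x))" by (rule F2)
  also have "\<dots> \<simeq> Neg (LAnd Tt (Neg x))" by (rule cN, rule cAL, rule negF)
  also have "\<dots> \<simeq> Neg (Neg x)" by (rule cN, rule F4)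
  also have "\<dots> \<simeq> x" by (rule F3)
  finally show ?thesis .
qed

lemma or_assoc: "LOr (LOr x y) z \<simeq> LOr x (LOr y z)"
proof (rule ncancel2)
  have "Neg (LOr (LOr x y) z) \<simeq> LAnd (Neg (LOr x y)) (Neg z)" by (rule dm_or)
  also have "\<dots> \<simeq> LAnd (LAnd (Neg x) (Neg y)) (Neg z)" by (rule cAL, rule dm_or)
  also have "\<dots> \<simeq> LAnd (Neg x) (LAnd (Neg y) (Neg z))" by (rule F7)
  finally show "Neg (LOr (LOr x y) z) \<simeq> LAnd (Neg x) (LAnd (Neg y) (Neg z))" .
  have "Neg (LOr x (LOr y z)) \<simeq> LAnd (Neg x) (Neg (LOr y z))" by (rule dm_or)
  also have "\<dots> \<simeq> LAnd (Neg x) (LAnd (Neg y) (Neg z))" by (rule cAR, rule dm_or)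
  finally show "Neg (LOr x (LOr y z)) \<simeq> LAnd (Neg x) (LAnd (Neg y) (Neg z))" .
qed

lemma nzt: "Neg (LOr z Tt) \<simeq> LAnd (Neg z) Ft"
proof -
  have "Neg (LOr z Tt) \<simeq> LAnd (Neg z) (Neg Tt)" by (rule dm_or)
  also have "\<dots> \<simeq> LAnd (Neg z) Ft" by (rule cAR, rule negT)
  finally show ?thesis .
qed

lemma F8d: "LOr (Neg x) Tt \<simeq> LOr x Tt"
proof (rule ncancel2)
  have "Neg (LOr (Neg x) Tt) \<simeq> LAnd (Neg (Neg x)) Ft" by (rule nzt)
  also have "\<dots> \<simeq> LAnd x Ft" by (rule cAL, rule F3)
  finally show "Neg (LOr (Neg x) Tt) \<simeq> LAnd x Ft" .
  have "Neg (LOr x Tt) \<simeq> LAnd (Neg x) Ft" by (rule nzt)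
  also have "\<dots> \<simeq> LAnd x Ft" by (rule F8)
  finally show "Neg (LOr x Tt) \<simeq> LAnd x Ft" .
qed

lemma NWF: "Neg (LAnd w Ft) \<simeq> LOr w Tt"
proof -
  have "Neg (LAnd w Ft) \<simeq> LOr (Neg w) (Neg Ft)" by (rule dm_and)
  also have "\<dots> \<simeq> LOr (Neg w) Tt" by (rule cOR, rule negF)
  also have "\<dots> \<simeq> LOr w Tt" by (rule F8d)
  finally show ?thesis .
qed

lemma andF_orT: "LAnd x Ft \<simeq> LAnd (LOr x Tt) Ft"
proof -
  have "LAnd x Ft \<simeq> LOr (LAnd x Ft) Ft" by (rule dsym, rule F5)
  also have "\<dots> \<simeq> LAnd (LOr x Tt) Ft" by (rule F9)
  finally show ?thesis .
qed

lemma F10d: "LAnd (LOr x y) (LOr z Tt) \<simeq> LOr (LAnd x (LOr z Tt)) (LAnd y (LOr z Tt))"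
proof (rule ncancel2)
  have "Neg (LAnd (LOr x y) (LOr z Tt)) \<simeq> LOr (Neg (LOr x y)) (Neg (LOr z Tt))" by (rule dm_and)
  also have "\<dots> \<simeq> LOr (LAnd (Neg x) (Neg y)) (LAnd (Neg z) Ft)" by (rule cO, rule dm_or, rule nzt)
  also have "\<dots> \<simeq> LAnd (LOr (Neg x) (LAnd (Neg z) Ft)) (LOr (Neg y) (LAnd (Neg z) Ft))" by (rule F10)
  finally show "Neg (LAnd (LOr x y) (LOr z Tt)) \<simeq> LAnd (LOr (Neg x) (LAnd (Neg z) Ft)) (LOr (Neg y) (LAnd (Neg z) Ft))" .
  have "Neg (LOr (LAnd x (LOr z Tt)) (LAnd y (LOr z Tt))) \<simeq> LAnd (Neg (LAnd x (LOr z Tt))) (Neg (LAnd y (LOr z Tt)))" by (rule dm_or)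
  also have "\<dots> \<simeq> LAnd (LOr (Neg x) (Neg (LOr z Tt))) (LOr (Neg y) (Neg (LOr z Tt)))" by (rule cA; rule dm_and)
  also have "\<dots> \<simeq> LAnd (LOr (Neg x) (LAnd (Neg z) Ft)) (LOr (Neg y) (LAnd (Neg z) Ft))" by (rule cA; rule cOR, rule nzt)
  finally show "Neg (LOr (LAnd x (LOr z Tt)) (LAnd y (LOr z Tt))) \<simeq> LAnd (LOr (Neg x) (LAnd (Neg z) Ft)) (LOr (Neg y) (LAnd (Neg z) Ft))" .
qed



fun ttm :: "'a etree \<Rightarrow> ('a, 'v) tm" where
  "ttm ET = Tt" | "ttm EF = Ft" | "ttm (ENode L a R) = LOr (LAnd (At a) (ttm L)) (ttm R)"

lemma TL1: "\<not> hasF p \<Longrightarrow> LOr (ttm p) y \<simeq> ttm p"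
proof (induction p)
  case ET then show ?case by (simp add: orT_l)
next
  case EF then show ?case by simp
next
  case (ENode L a R)
  have "LOr (ttm (ENode L a R)) y \<simeq> LOr (LAnd (At a) (ttm L)) (LOr (ttm R) y)" by (simp add: or_assoc)
  also have "\<dots> \<simeq> ttm (ENode L a R)" using ENode by (simp add: cOR)
  finally show ?case .
qed

lemma TL2: "\<not> hasF p \<Longrightarrow> Neg (ttm p) \<simeq> LAnd (ttm p) Ft"
proof -
  assume p: "\<not> hasF p"
  have "Neg (ttm p) \<simeq> Neg (LOr (ttm p) Tt)" by (rule cN, rule dsym, rule TL1[OF p])
  also have "\<dots> \<simeq> Neg (LOr (Neg (ttm p)) Tt)" by (rule cN, rule dsym, rule F8d)
  also have "\<dots> \<simeq> LAnd (Neg (Neg (ttm p))) Ft" by (rule nzt)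
  also have "\<dots> \<simeq> LAnd (ttm p) Ft" by (rule cAL, rule F3)
  finally show ?thesis .
qed

lemma TL4: "\<not> hasF p \<Longrightarrow> Neg (LAnd (ttm p) Ft) \<simeq> ttm p"
  by (rule dtrans, rule NWF, rule TL1)

lemma TL3: "\<not> hasF p \<Longrightarrow> Neg (LAnd (ttm p) x) \<simeq> LAnd (ttm p) (Neg x)"
proof -
  assume p: "\<not> hasF p"
  have "Neg (LAnd (ttm p) x) \<simeq> LOr (Neg (ttm p)) (Neg x)" by (rule dm_and)
  also have "\<dots> \<simeq> LOr (LAnd (ttm p) Ft) (Neg x)" by (rule cOL, rule TL2[OF p])
  also have "\<dots> \<simeq> LAnd (LOr (ttm p) Tt) (Neg x)" by (rule F9)
  also have "\<dots> \<simeq> LAnd (ttm p) (Neg x)" by (rule cAL, rule TL1[OF p])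
  finally show ?thesis .
qed

lemma TDist: "\<not> hasF p \<Longrightarrow> LAnd (LOr u v) (ttm p) \<simeq> LOr (LAnd u (ttm p)) (LAnd v (ttm p))"
proof -
  assume p: "\<not> hasF p"
  have "LAnd (LOr u v) (ttm p) \<simeq> LAnd (LOr u v) (LOr (ttm p) Tt)" by (rule cAR, rule dsym, rule TL1[OF p])
  also have "\<dots> \<simeq> LOr (LAnd u (LOr (ttm p) Tt)) (LAnd v (LOr (ttm p) Tt))" by (rule F10d)
  also have "\<dots> \<simeq> LOr (LAnd u (ttm p)) (LAnd v (ttm p))" by (rule cO; rule cAR, rule TL1[OF p])
  finally show ?thesis .
qed

lemma TC: "\<not> hasF p \<Longrightarrow> \<not> hasF q \<Longrightarrow> LAnd (ttm p) (ttm q) \<simeq> ttm (repl p q EF)"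
proof (induction p)
  case ET then show ?case by (simp add: F4)
next
  case EF then show ?case by simp
next
  case (ENode L a R)
  have "LAnd (ttm (ENode L a R)) (ttm q) \<simeq> LOr (LAnd (LAnd (At a) (ttm L)) (ttm q)) (LAnd (ttm R) (ttm q))"
    using TDist ENode.prems by simp
  also have "\<dots> \<simeq> LOr (LAnd (At a) (LAnd (ttm L) (ttm q))) (LAnd (ttm R) (ttm q))" by (rule cOL, rule F7)
  also have "\<dots> \<simeq> LOr (LAnd (At a) (ttm (repl L q EF))) (ttm (repl R q EF))"
    using ENode by (auto intro!: cO cAR)
  finally show ?case by simp
qed

lemma ttm_noF: "\<not> hasF p \<Longrightarrow> \<not> hasF q \<Longrightarrow> \<not> hasF (repl p q EF)" by simp

definition lt :: "('a, nat) tm \<Rightarrow> 'a etree \<Rightarrow> 'a etree \<Rightarrow> ('a, nat) tm" where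
  "lt x pt pf = LOr (LAnd x (ttm pt)) (LAnd (ttm pf) Ft)"

lemma LN: "\<not> hasF pt \<Longrightarrow> \<not> hasF pf \<Longrightarrow> Neg (lt x pt pf) \<simeq> lt (Neg x) pf pt"
proof -
  assume a: "\<not> hasF pt" "\<not> hasF pf"
  have "Neg (lt x pt pf) \<simeq> LAnd (Neg (LAnd x (ttm pt))) (Neg (LAnd (ttm pf) Ft))"
    unfolding lt_def by (rule dm_or)
  also have "\<dots> \<simeq> LAnd (LOr (Neg x) (Neg (ttm pt))) (ttm pf)" by (rule cA, rule dm_and, rule TL4[OF a(2)])
  also have "\<dots> \<simeq> LAnd (LOr (Neg x) (LAnd (ttm pt) Ft)) (ttm pf)" by (rule cAL, rule cOR, rule TL2[OF a(1)])
  finally have l: "Neg (lt x pt pf) \<simeq> LAnd (LOr (Neg x) (LAnd (ttm pt) Ft)) (ttm pf)" .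
  have "lt (Neg x) pf pt \<simeq> LAnd (LOr (Neg x) (LAnd (ttm pt) Ft)) (LOr (ttm pf) (LAnd (ttm pt) Ft))"
    unfolding lt_def by (rule F10)
  also have "\<dots> \<simeq> LAnd (LOr (Neg x) (LAnd (ttm pt) Ft)) (ttm pf)" by (rule cAR, rule TL1[OF a(2)])
  finally show ?thesis using l by (metis dsym dtrans)
qed

lemma LPT: "\<not> hasF pt \<Longrightarrow> \<not> hasF pf \<Longrightarrow> \<not> hasF q \<Longrightarrow>
    LAnd (lt x pt pf) (ttm q) \<simeq> lt x (repl pt q EF) pf"
proof -
  assume a: "\<not> hasF pt" "\<not> hasF pf" "\<not> hasF q"
  have "LAnd (lt x pt pf) (ttm q) \<simeq> LOr (LAnd (LAnd x (ttm pt)) (ttm q)) (LAnd (LAnd (ttm pf) Ft) (ttm q))"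
    unfolding lt_def by (rule TDist[OF a(3)])
  also have "\<dots> \<simeq> LOr (LAnd x (LAnd (ttm pt) (ttm q))) (LAnd (ttm pf) (LAnd Ft (ttm q)))" by (rule cO; rule F7)
  also have "\<dots> \<simeq> LOr (LAnd x (ttm (repl pt q EF))) (LAnd (ttm pf) Ft)"
    by (rule cO, rule cAR, rule TC[OF a(1,3)], rule cAR, rule F6)
  finally show ?thesis unfolding lt_def .
qed

lemma LOT: "\<not> hasF pt \<Longrightarrow> \<not> hasF pf \<Longrightarrow> \<not> hasF q \<Longrightarrow> \<not> hasF r \<Longrightarrow>
    LOr (LAnd (lt x pt pf) (ttm r)) (ttm q) \<simeq> LOr (LAnd x (ttm (repl pt r EF))) (ttm (repl pf q EF))"
proof -
  assume a: "\<not> hasF pt" "\<not> hasF pf" "\<not> hasF q" "\<not> hasF r"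
  have "LOr (LAnd (lt x pt pf) (ttm r)) (ttm q) \<simeq> LOr (lt x (repl pt r EF) pf) (ttm q)"
    by (rule cOL, rule LPT[OF a(1,2,4)])
  also have "\<dots> \<simeq> LOr (LAnd x (ttm (repl pt r EF))) (LOr (LAnd (ttm pf) Ft) (ttm q))"
    unfolding lt_def by (rule or_assoc)
  also have "\<dots> \<simeq> LOr (LAnd x (ttm (repl pt r EF))) (LAnd (LOr (ttm pf) Tt) (ttm q))" by (rule cOR, rule F9)
  also have "\<dots> \<simeq> LOr (LAnd x (ttm (repl pt r EF))) (LAnd (ttm pf) (ttm q))" by (rule cOR, rule cAL, rule TL1[OF a(2)])
  also have "\<dots> \<simeq> LOr (LAnd x (ttm (repl pt r EF))) (ttm (repl pf q EF))" by (rule cOR, rule TC[OF a(2,3)])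
  finally show ?thesis .
qed

lemma SW: "\<not> hasF U \<Longrightarrow> \<not> hasF V \<Longrightarrow>
    LOr (LAnd (Neg x) (ttm U)) (ttm V) \<simeq> LOr (LAnd x (ttm V)) (ttm U)"
proof -
  assume a: "\<not> hasF U" "\<not> hasF V"
  let ?u = "ttm U :: ('a, nat) tm" and ?v = "ttm V :: ('a, nat) tm"
  let ?w = "LOr (LAnd x ?v) (LAnd ?u Ft)"
  have "LOr (LAnd (Neg x) ?u) ?v \<simeq> Neg (LAnd (Neg (LAnd (Neg x) ?u)) (Neg ?v))" by (rule F2)
  also have "\<dots> \<simeq> Neg (LAnd (LOr x (LAnd ?u Ft)) (LAnd ?v Ft))"
  proof (rule cN, rule cA)
    have "Neg (LAnd (Neg x) ?u) \<simeq> LOr (Neg (Neg x)) (Neg ?u)" by (rule dm_and)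
    also have "\<dots> \<simeq> LOr x (LAnd ?u Ft)" by (rule cO, rule F3, rule TL2[OF a(1)])
    finally show "Neg (LAnd (Neg x) ?u) \<simeq> LOr x (LAnd ?u Ft)" .
    show "Neg ?v \<simeq> LAnd ?v Ft" by (rule TL2[OF a(2)])
  qed
  also have "\<dots> \<simeq> Neg (LAnd (LAnd (LOr x (LAnd ?u Ft)) ?v) Ft)" by (rule cN, rule dsym, rule F7)
  also have "\<dots> \<simeq> Neg (LAnd ?w Ft)"
  proof (rule cN, rule cAL)
    have "LAnd (LOr x (LAnd ?u Ft)) ?v \<simeq> LAnd (LOr x (LAnd ?u Ft)) (LOr ?v (LAnd ?u Ft))"
      by (rule cAR, rule dsym, rule TL1[OF a(2)])
    also have "\<dots> \<simeq> ?w" by (rule dsym, rule F10)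
    finally show "LAnd (LOr x (LAnd ?u Ft)) ?v \<simeq> ?w" .
  qed
  also have "\<dots> \<simeq> LOr ?w Tt" by (rule NWF)
  also have "\<dots> \<simeq> LOr (LAnd x ?v) (LOr (LAnd ?u Ft) Tt)" by (rule or_assoc)
  also have "\<dots> \<simeq> LOr (LAnd x ?v) ?u"
  proof (rule cOR)
    have "LOr (LAnd ?u Ft) Tt \<simeq> LAnd (LOr ?u Tt) Tt" by (rule F9)
    also have "\<dots> \<simeq> LOr ?u Tt" by (rule andT)
    also have "\<dots> \<simeq> ?u" by (rule TL1[OF a(1)])
    finally show "LOr (LAnd ?u Ft) Tt \<simeq> ?u" .
  qed
  finally show ?thesis .
qed

lemma H1: "\<not> hasF p \<Longrightarrow>
   LOr (LAnd x y) (ttm p) \<simeq> LOr (LOr (LAnd (Neg x) (ttm p)) (LAnd (Neg y) (ttm p))) Tt"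
proof -
  assume a: "\<not> hasF p"
  let ?t = "ttm p :: ('a, nat) tm"
  have "LOr (LAnd x y) ?t \<simeq> Neg (LAnd (Neg (LAnd x y)) (Neg ?t))" by (rule F2)
  also have "\<dots> \<simeq> Neg (LAnd (LOr (Neg x) (Neg y)) (LAnd ?t Ft))" by (rule cN, rule cA, rule dm_and, rule TL2[OF a])
  also have "\<dots> \<simeq> Neg (LAnd (LAnd (LOr (Neg x) (Neg y)) ?t) Ft)" by (rule cN, rule dsym, rule F7)
  also have "\<dots> \<simeq> LOr (LAnd (LOr (Neg x) (Neg y)) ?t) Tt" by (rule NWF)
  also have "\<dots> \<simeq> LOr (LOr (LAnd (Neg x) ?t) (LAnd (Neg y) ?t)) Tt" by (rule cOL, rule TDist[OF a])
  finally show ?thesis .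
qed

lemma G1: "\<not> hasF p \<Longrightarrow> LOr (LAnd x y) (ttm p) \<simeq> LOr (LAnd x (LOr y (ttm p))) (ttm p)"
proof -
  assume a: "\<not> hasF p"
  let ?t = "ttm p :: ('a, nat) tm"
  let ?A = "LAnd (Neg x) ?t" and ?B = "LAnd (Neg y) ?t" and ?B' = "LAnd (Neg (LOr y ?t)) ?t"
  have l: "LOr (LAnd x y) ?t \<simeq> LOr ?A (LOr ?B Tt)" by (rule dtrans, rule H1[OF a], rule or_assoc)
  have "LOr (LAnd x (LOr y ?t)) ?t \<simeq> LOr ?A (LOr ?B' Tt)" by (rule dtrans, rule H1[OF a], rule or_assoc)
  also have "\<dots> \<simeq> LOr ?A (LOr ?B Tt)"
  proof (rule cOR)
    have "?B' \<simeq> LAnd (LAnd (Neg y) (Neg ?t)) ?t" by (rule cAL, rule dm_or)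
    also have "\<dots> \<simeq> LAnd (LAnd (Neg y) (LAnd ?t Ft)) ?t" by (rule cAL, rule cAR, rule TL2[OF a])
    also have "\<dots> \<simeq> LAnd (Neg y) (LAnd (LAnd ?t Ft) ?t)" by (rule F7)
    also have "\<dots> \<simeq> LAnd (Neg y) (LAnd ?t (LAnd Ft ?t))" by (rule cAR, rule F7)
    also have "\<dots> \<simeq> LAnd (Neg y) (LAnd ?t Ft)" by (rule cAR, rule cAR, rule F6)
    also have "\<dots> \<simeq> LAnd ?B Ft" by (rule dsym, rule F7)
    finally have "LOr ?B' Tt \<simeq> LOr (LAnd ?B Ft) Tt" by (rule cOL)
    also have "\<dots> \<simeq> LAnd (LOr ?B Tt) Tt" by (rule F9)
    also have "\<dots> \<simeq> LOr ?B Tt" by (rule andT)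
    finally show "LOr ?B' Tt \<simeq> LOr ?B Tt" .
  qed
  finally show ?thesis using l by (metis dsym dtrans)
qed



fun cterm :: "'a core \<Rightarrow> ('a, nat) tm" where
  "cterm (Lit s a pt pf) = lt (if s then At a else Neg (At a)) pt pf"
| "cterm (Cj c d) = LAnd (cterm c) (cterm d)"
| "cterm (Dj c d) = LOr (cterm c) (cterm d)"

lemma CN: "wfc c \<Longrightarrow> Neg (cterm c) \<simeq> cterm (dualc c)"
proof (induction c)
  case (Lit s a pt pf)
  show ?case
  proof (cases s)
    case True then show ?thesis using LN[of pt pf "At a"] Lit by simp
  next
    case False
    have "Neg (cterm (Lit s a pt pf)) \<simeq> lt (Neg (Neg (At a))) pf pt" using LN[of pt pf "Neg (At a)"] Lit False by simp
    also have "\<dots> \<simeq> lt (At a) pf pt" unfolding lt_def by (rule cOL, rule cAL, rule F3)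
    finally show ?thesis using False by simp
  qed
next
  case (Cj c d)
  then show ?case by (auto intro: dtrans[OF dm_and] cO)
next
  case (Dj c d)
  then show ?case by (auto intro: dtrans[OF dm_or] cA)
qed

fun padT :: "'a core \<Rightarrow> 'a etree \<Rightarrow> 'a core" where
  "padT (Lit s a pt pf) q = Lit s a (repl pt q EF) pf"
| "padT (Cj c d) q = Cj c (padT d q)"
| "padT (Dj c d) q = Dj (padT c q) (padT d q)"

lemma isDj_padT: "isDj (padT c q) = isDj c" by (cases c) auto
lemma isCj_padT: "isCj (padT c q) = isCj c" by (cases c) auto

lemma wfc_padT: "wfc c \<Longrightarrow> \<not> hasF q \<Longrightarrow> wfc (padT c q)"
  by (induction c) (auto simp: isDj_padT)

lemma CPT: "wfc c \<Longrightarrow> \<not> hasF q \<Longrightarrow> LAnd (cterm c) (ttm q) \<simeq> cterm (padT c q)"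
proof (induction c)
  case (Lit s a pt pf)
  then show ?case using LPT[of pt pf q] by simp
next
  case (Cj c d)
  then show ?case by (auto intro: dtrans[OF F7] cAR)
next
  case (Dj c d)
  then show ?case by (auto intro: dtrans[OF TDist] cO)
qed

fun conj :: "'a core \<Rightarrow> 'a core \<Rightarrow> 'a core" where
  "conj (Cj c1 c2) d = Cj c1 (conj c2 d)"
| "conj c d = Cj c d"

lemma wfc_conj: "wfc c \<Longrightarrow> wfc d \<Longrightarrow> wfc (conj c d)"
  by (induction c d rule: conj.induct) auto

lemma CJ: "LAnd (cterm c) (cterm d) \<simeq> cterm (conj c d)"
proof (induction c d rule: conj.induct)
  case (1 c1 c2 d)
  then show ?case by (auto intro: dtrans[OF F7] cAR)
qed (auto intro: drefl)

lemma COT: "wfc c \<Longrightarrow> \<not> hasF r \<Longrightarrow> \<not> hasF q \<Longrightarrow>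
   LOr (LAnd (cterm c) (ttm r)) (ttm q) \<simeq> ttm (repl (ct c) r q)"
proof (induction c arbitrary: r q)
  case (Lit s a pt pf)
  have w: "\<not> hasF pt" "\<not> hasF pf" using Lit by auto
  have e1: "repl pt r q = repl pt r EF" using noF w by blast
  have e2: "repl (repl pf EF EF) r q = repl pf q EF" using noF[of pf q q EF] w by (simp add: repl_repl)
  show ?case
  proof (cases s)
    case True
    then show ?thesis using LOT[of pt pf q r "At a"] w Lit.prems e1 e2 by simp
  next
    case False
    have "LOr (LAnd (cterm (Lit s a pt pf)) (ttm r)) (ttm q)
       \<simeq> LOr (LAnd (Neg (At a)) (ttm (repl pt r EF))) (ttm (repl pf q EF))"
      using LOT[of pt pf q r "Neg (At a)"] w Lit.prems False by simp
    also have "\<dots> \<simeq> LOr (LAnd (At a) (ttm (repl pf q EF))) (ttm (repl pt r EF))"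
      by (rule SW) (use w Lit.prems in simp_all)
    finally show ?thesis using False e1 e2 by simp
  qed
next
  case (Cj c d)
  have wd: "\<not> hasF (repl (ct d) r q)" using Cj.prems by simp
  have "LOr (LAnd (cterm (Cj c d)) (ttm r)) (ttm q) \<simeq> LOr (LAnd (cterm c) (LAnd (cterm d) (ttm r))) (ttm q)"
    by (simp, rule cOL, rule F7)
  also have "\<dots> \<simeq> LOr (LAnd (cterm c) (LOr (LAnd (cterm d) (ttm r)) (ttm q))) (ttm q)"
    by (rule G1, rule Cj.prems)
  also have "\<dots> \<simeq> LOr (LAnd (cterm c) (ttm (repl (ct d) r q))) (ttm q)"
    by (rule cOL, rule cAR, rule Cj.IH(2)) (use Cj.prems in auto)
  also have "\<dots> \<simeq> ttm (repl (ct c) (repl (ct d) r q) q)"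
    by (rule Cj.IH(1)) (use Cj.prems wd in auto)
  finally show ?case by (simp add: repl_repl)
next
  case (Dj c d)
  have wd: "\<not> hasF (repl (ct d) r q)" using Dj.prems by simp
  have "LOr (LAnd (cterm (Dj c d)) (ttm r)) (ttm q) \<simeq> LOr (LOr (LAnd (cterm c) (ttm r)) (LAnd (cterm d) (ttm r))) (ttm q)"
    by (simp, rule cOL, rule TDist, rule Dj.prems)
  also have "\<dots> \<simeq> LOr (LAnd (cterm c) (ttm r)) (LOr (LAnd (cterm d) (ttm r)) (ttm q))" by (rule or_assoc)
  also have "\<dots> \<simeq> LOr (LAnd (cterm c) (ttm r)) (ttm (repl (ct d) r q))"
    by (rule cOR, rule Dj.IH(2)) (use Dj.prems in auto)
  also have "\<dots> \<simeq> ttm (repl (ct c) r (repl (ct d) r q))"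
    by (rule Dj.IH(1)) (use Dj.prems wd in auto)
  finally show ?case by (simp add: repl_repl)
qed

datatype 'a nf = NT "'a etree" | NFf "'a etree" | NM "'a etree" "'a core"

fun nterm :: "'a nf \<Rightarrow> ('a, nat) tm" where
  "nterm (NT p) = ttm p" | "nterm (NFf p) = LAnd (ttm p) Ft" | "nterm (NM p c) = LAnd (ttm p) (cterm c)"

fun wfn :: "'a nf \<Rightarrow> bool" where
  "wfn (NT p) = (\<not> hasF p)" | "wfn (NFf p) = (\<not> hasF p)" | "wfn (NM p c) = (\<not> hasF p \<and> wfc c)"

fun ntree :: "'a nf \<Rightarrow> 'a etree" where
  "ntree (NT p) = p" | "ntree (NFf p) = repl p EF EF" | "ntree (NM p c) = repl p (ct c) EF"

fun nneg :: "'a nf \<Rightarrow> 'a nf" where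
  "nneg (NT p) = NFf p" | "nneg (NFf p) = NT p" | "nneg (NM p c) = NM p (dualc c)"

fun nand :: "'a nf \<Rightarrow> 'a nf \<Rightarrow> 'a nf" where
  "nand (NT p) (NT p') = NT (repl p p' EF)"
| "nand (NT p) (NFf p') = NFf (repl p p' EF)"
| "nand (NT p) (NM p' c) = NM (repl p p' EF) c"
| "nand (NFf p) _ = NFf p"
| "nand (NM p c) (NT p') = NM p (padT c p')"
| "nand (NM p c) (NFf p') = NFf (repl p (repl (ct c) p' ET) EF)"
| "nand (NM p c) (NM p' d) = NM p (conj (padT c p') d)"

lemma wfn_nneg: "wfn N \<Longrightarrow> wfn (nneg N)"
  by (cases N) (auto simp: wfc_dual)

lemma wfn_nand: "wfn N \<Longrightarrow> wfn M \<Longrightarrow> wfn (nand N M)"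
  by (cases N; cases M) (auto simp: wfc_padT wfc_conj)

lemma NNeg: assumes w: "wfn N" shows "Neg (nterm N) \<simeq> nterm (nneg N)"
proof (cases N)
  case (NT p) then show ?thesis using TL2[of p] w by simp
next
  case (NFf p) then show ?thesis using TL4[of p] w by simp
next
  case (NM p c)
  then show ?thesis using w TL3[of p "cterm c"] CN[of c] by (auto intro: dtrans cAR)
qed

lemma NAnd: "wfn N \<Longrightarrow> wfn M \<Longrightarrow> LAnd (nterm N) (nterm M) \<simeq> nterm (nand N M)"
proof (cases N)
  case (NT p)
  assume w: "wfn N" "wfn M"
  show ?thesis
  proof (cases M)
    case (NT p') then show ?thesis using w \<open>N = NT p\<close> TC[of p p'] by simp
  next
    case (NFf p')
    have "LAnd (ttm p) (LAnd (ttm p') Ft) \<simeq> LAnd (LAnd (ttm p) (ttm p')) Ft" by (rule dsym, rule F7)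
    also have "\<dots> \<simeq> LAnd (ttm (repl p p' EF)) Ft" by (rule cAL, rule TC) (use w NT NFf in auto)
    finally show ?thesis using NT NFf by simp
  next
    case (NM p' c)
    have "LAnd (ttm p) (LAnd (ttm p') (cterm c)) \<simeq> LAnd (LAnd (ttm p) (ttm p')) (cterm c)" by (rule dsym, rule F7)
    also have "\<dots> \<simeq> LAnd (ttm (repl p p' EF)) (cterm c)" by (rule cAL, rule TC) (use w NT NM in auto)
    finally show ?thesis using NT NM by simp
  qed
next
  case (NFf p)
  have "LAnd (LAnd (ttm p) Ft) (nterm M) \<simeq> LAnd (ttm p) (LAnd Ft (nterm M))" by (rule F7)
  also have "\<dots> \<simeq> LAnd (ttm p) Ft" by (rule cAR, rule F6)
  finally show ?thesis using NFf by (cases M) auto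
next
  case (NM p c)
  note NMc = NM
  assume w: "wfn N" "wfn M"
  have wp: "\<not> hasF p" "wfc c" using w NM by auto
  show ?thesis
  proof (cases M)
    case (NT p')
    have "LAnd (LAnd (ttm p) (cterm c)) (ttm p') \<simeq> LAnd (ttm p) (LAnd (cterm c) (ttm p'))" by (rule F7)
    also have "\<dots> \<simeq> LAnd (ttm p) (cterm (padT c p'))" by (rule cAR, rule CPT) (use w wp NT in auto)
    finally show ?thesis using NMc NT by simp
  next
    case (NFf p')
    have wp': "\<not> hasF p'" using w NFf by simp
    let ?K = "repl (ct c) p' ET"
    have "LAnd (LAnd (ttm p) (cterm c)) (LAnd (ttm p') Ft) \<simeq> LAnd (ttm p) (LAnd (cterm c) (LAnd (ttm p') Ft))" by (rule F7)
    also have "\<dots> \<simeq> LAnd (ttm p) (LAnd (LAnd (cterm c) (ttm p')) Ft)" by (rule cAR, rule dsym, rule F7)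
    also have "\<dots> \<simeq> LAnd (ttm p) (LAnd (LOr (LAnd (cterm c) (ttm p')) Tt) Ft)" by (rule cAR, rule andF_orT)
    also have "\<dots> \<simeq> LAnd (ttm p) (LAnd (ttm ?K) Ft)"
      using COT[of c p' ET] wp wp' by (auto intro!: cAR cAL)
    also have "\<dots> \<simeq> LAnd (LAnd (ttm p) (ttm ?K)) Ft" by (rule dsym, rule F7)
    also have "\<dots> \<simeq> LAnd (ttm (repl p ?K EF)) Ft" by (rule cAL, rule TC) (use wp wp' in auto)
    finally show ?thesis using NMc NFf by simp
  next
    case (NM p' d)
    have wp': "\<not> hasF p'" "wfc d" using w NM by auto
    have "LAnd (LAnd (ttm p) (cterm c)) (LAnd (ttm p') (cterm d)) \<simeq> LAnd (ttm p) (LAnd (cterm c) (LAnd (ttm p') (cterm d)))" by (rule F7)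
    also have "\<dots> \<simeq> LAnd (ttm p) (LAnd (LAnd (cterm c) (ttm p')) (cterm d))" by (rule cAR, rule dsym, rule F7)
    also have "\<dots> \<simeq> LAnd (ttm p) (LAnd (cterm (padT c p')) (cterm d))" by (rule cAR, rule cAL, rule CPT) (use wp wp' in auto)
    also have "\<dots> \<simeq> LAnd (ttm p) (cterm (conj (padT c p') d))" by (rule cAR, rule CJ)
    finally show ?thesis using NMc NM by simp
  qed
qed

fun nrm :: "'a sterm \<Rightarrow> 'a nf" where
  "nrm ST = NT ET"
| "nrm SF = NFf ET"
| "nrm (SAtom a) = NM ET (Lit True a ET ET)"
| "nrm (SNeg P) = nneg (nrm P)"
| "nrm (SAnd P Q) = nand (nrm P) (nrm Q)"
| "nrm (SOr P Q) = nneg (nand (nneg (nrm P)) (nneg (nrm Q)))"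

lemma wfn_nrm: "wfn (nrm P)"
  by (induction P) (auto simp: wfn_nneg wfn_nand)

lemma NF1: "emb P \<simeq> nterm (nrm P)"
proof (induction P)
  case ST then show ?case by (simp add: drefl)
next
  case SF then show ?case by (simp add: dsym F4)
next
  case (SAtom a)
  have "LAnd Tt (LOr (LAnd (At a) Tt) (LAnd Tt Ft)) \<simeq> LOr (LAnd (At a) Tt) (LAnd Tt Ft)" by (rule F4)
  also have "\<dots> \<simeq> LOr (At a) Ft" by (rule cO, rule andT, rule F4)
  also have "\<dots> \<simeq> At a" by (rule F5)
  finally show ?case by (simp add: lt_def dsym)
next
  case (SNeg P)
  then show ?case using NNeg[OF wfn_nrm[of P]] by (auto intro: dtrans cN)
next
  case (SAnd P Q)
  then show ?case using NAnd[OF wfn_nrm[of P] wfn_nrm[of Q]] by (auto intro: dtrans cA)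
next
  case (SOr P Q)
  have "emb (SOr P Q) \<simeq> Neg (LAnd (Neg (emb P)) (Neg (emb Q)))" by (simp add: F2)
  also have "\<dots> \<simeq> Neg (LAnd (nterm (nneg (nrm P))) (nterm (nneg (nrm Q))))"
    using SOr NNeg[OF wfn_nrm[of P]] NNeg[OF wfn_nrm[of Q]] by (auto intro!: cN cA intro: dtrans)
  also have "\<dots> \<simeq> Neg (nterm (nand (nneg (nrm P)) (nneg (nrm Q))))"
    by (rule cN, rule NAnd) (auto simp: wfn_nneg wfn_nrm)
  also have "\<dots> \<simeq> nterm (nneg (nand (nneg (nrm P)) (nneg (nrm Q))))"
    by (rule NNeg) (auto simp: wfn_nneg wfn_nrm wfn_nand)
  finally show ?case by simp
qed

fun ev :: "('v \<Rightarrow> 'a etree) \<Rightarrow> ('a, 'v) tm \<Rightarrow> 'a etree" where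
  "ev \<sigma> (Var v) = \<sigma> v"
| "ev \<sigma> Tt = ET"
| "ev \<sigma> Ft = EF"
| "ev \<sigma> (At a) = ENode ET a EF"
| "ev \<sigma> (Neg x) = repl (ev \<sigma> x) EF ET"
| "ev \<sigma> (LAnd x y) = repl (ev \<sigma> x) (ev \<sigma> y) EF"
| "ev \<sigma> (LOr x y) = repl (ev \<sigma> x) ET (ev \<sigma> y)"

lemma ev_subst: "ev \<sigma> (subst s t) = ev (\<lambda>v. ev \<sigma> (s v)) t"
  by (induction t) auto

lemma ax_valid: "(l, r) \<in> EqFSCL \<Longrightarrow> ev \<sigma> l = ev \<sigma> r"
  unfolding EqFSCL_def Let_def by (auto simp: repl_repl)

lemma sound: "derivable EqFSCL s t \<Longrightarrow> ev \<sigma> s = ev \<sigma> t"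
proof (induction arbitrary: \<sigma> rule: derivable.induct)
  case (ax l r s)
  then show ?case by (simp add: ev_subst ax_valid)
qed auto

lemma ev_emb: "ev \<sigma> (emb P) = se P"
  by (induction P) auto

lemma ev_ttm: "\<not> hasF p \<Longrightarrow> ev \<sigma> (ttm p) = p"
  by (induction p) (auto simp: noF_id)

lemma ev_ct: "wfc c \<Longrightarrow> ev \<sigma> (cterm c) = ct c"
  by (induction c) (auto simp: lt_def ev_ttm noF_id)

lemma ev_nterm: "wfn N \<Longrightarrow> ev \<sigma> (nterm N) = ntree N"
  by (cases N) (auto simp: ev_ttm ev_ct)

lemma NI: "wfn N \<Longrightarrow> wfn M \<Longrightarrow> ntree N = ntree M \<Longrightarrow> N = M"
proof -
  assume w: "wfn N" "wfn M" and e: "ntree N = ntree M"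
  have cls: "(hasT (ntree N) \<and> \<not> hasF (ntree N) \<and> (\<exists>p. N = NT p)) \<or>
             (\<not> hasT (ntree N) \<and> hasF (ntree N) \<and> (\<exists>p. N = NFf p)) \<or>
             (hasT (ntree N) \<and> hasF (ntree N) \<and> (\<exists>p c. N = NM p c))" if "wfn N" for N :: "'a nf"
    using that hasT_of_noF wfc_TF' by (cases N) auto
  have inj: "repl x EF EF = repl y EF EF \<Longrightarrow> \<not> hasF x \<Longrightarrow> \<not> hasF y \<Longrightarrow> x = y" for x y :: "'a etree"
    using PU[of x y EF EF] prime_EF by blast
  have hT: "hasT (ntree N) = hasT (ntree M)" "hasF (ntree N) = hasF (ntree M)" using e by simp_all
  show ?thesis
  proof (cases N)
    case (NT p)
    then obtain p' where "M = NT p'" using cls[OF w(1)] cls[OF w(2)] hT by auto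
    then show ?thesis using NT e by simp
  next
    case (NFf p)
    then obtain p' where "M = NFf p'" using cls[OF w(1)] cls[OF w(2)] hT by auto
    then show ?thesis using NFf e w inj by simp
  next
    case (NM p c)
    then obtain p' c' where M: "M = NM p' c'" using cls[OF w(1)] cls[OF w(2)] hT by fastforce
    have "p = p' \<and> ct c = ct c'" using PU[of p p' "ct c" "ct c'"] PR[of c] PR[of c'] w NM M e by simp
    then show ?thesis using CI[of c c'] w NM M by simp
  qed
qed

theorem theorem2p4:
  fixes P Q :: "'a sterm"
  shows "derivable EqFSCL (emb P) (emb Q) \<longleftrightarrow> se P = se Q"
proof
  assume "derivable EqFSCL (emb P) (emb Q)"
  then show "se P = se Q" using sound[of "emb P" "emb Q" "\<lambda>_. ET"] ev_emb by metis
next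
  assume e: "se P = se Q"
  have "se P = ntree (nrm P)" for P :: "'a sterm"
    using sound[OF NF1[of P], of "\<lambda>_. ET"] ev_emb ev_nterm[OF wfn_nrm] by metis
  then have "nrm P = nrm Q" using NI wfn_nrm e by metis
  then show "derivable EqFSCL (emb P) (emb Q)" using NF1[of P] NF1[of Q] by (metis dsym dtrans)
qed


end
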